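(* Let $k\ge1$ and $n$ be integers. For the graph $G(n,k)$ the following are equivalent: (A) $G(n,k)$ has no cycles; (B) both $k-1$ and $(n-3)_{k+1}$ lie in the tail; (C) both $0$ and $(n-1)_{k+1}$ lie in the tail; (D) both $0$ and $k-1$ lie in the tail.
   Context: For an integer $\ell$, $\ell_k$ and $\ell_{k+1}$ denote the least nonnegative residues of $\ell$ modulo $k$ and $k+1$. $G(n,k)$ is the directed graph on vertices $0,1,\dots,k$ whose edges are exactly the $k$ edges $(i+n-2)_{k+1}\to(i+n-1)_k$, $1\le i\le k$; a loop $a\to a$ counts as a cycle. Vertex $k$ has in-degree $0$, vertex $(n-2)_{k+1}$ has out-degree $0$, and all other vertices have in- and out-degree $1$, so $G(n,k)$ is a disjoint union of directed cycles and one directed path, the tail, from $k$ to $(n-2)_{k+1}$ (consisting of the single vertex $k$ if $k=(n-2)_{k+1}$). *)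

theory Defs
  imports Main
begin

definition Gedges :: "int \<Rightarrow> int \<Rightarrow> (int \<times> int) set" where
  "Gedges n k = {((i + n - 2) mod (k + 1), (i + n - 1) mod k) | i. 1 \<le> i \<and> i \<le> k}"

definition has_cycle :: "int \<Rightarrow> int \<Rightarrow> bool" where
  "has_cycle n k \<longleftrightarrow> (\<exists>v. (v, v) \<in> (Gedges n k)\<^sup>+)"

definition tail :: "int \<Rightarrow> int \<Rightarrow> int set" where
  "tail n k = {v. (k, v) \<in> (Gedges n k)\<^sup>* \<and> (v, (n - 2) mod (k + 1)) \<in> (Gedges n k)\<^sup>*}"

end

theory Submission
  imports Defs
begin
definition snk :: "int \<Rightarrow> int \<Rightarrow> int" where "snk n k = (n - 2) mod (k + 1)"
definition ff :: "int \<Rightarrow> int \<Rightarrow> int \<Rightarrow> int" where "ff n k v = ((v - n + 1) mod (k + 1) + n) mod k"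

lemma mm: "((a::int) mod m + c) mod m = (a + c) mod m"
  by (rule mod_add_left_eq)

lemma mm2: "((a::int) mod m - b + c) mod m = (a - b + c) mod m"
proof -
  have "((a::int) mod m - b + c) mod m = (a mod m + (c - b)) mod m" by (simp add: algebra_simps)
  also have "\<dots> = (a + (c - b)) mod m" by (rule mod_add_left_eq)
  finally show ?thesis by (simp add: algebra_simps)
qed

lemma edge_iff: fixes n k a b :: int assumes k: "k \<ge> 1"
  shows "(a, b) \<in> Gedges n k \<longleftrightarrow> 0 \<le> a \<and> a \<le> k \<and> a \<noteq> snk n k \<and> b = ff n k a"
proof
  assume "(a, b) \<in> Gedges n k"
  then obtain i where i: "1 \<le> i" "i \<le> k" "a = (i + n - 2) mod (k + 1)" "b = (i + n - 1) mod k"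
    unfolding Gedges_def by auto
  have "(a - n + 1) mod (k + 1) = (i + n - 2 - n + 1) mod (k + 1)" unfolding i(3) by (rule mm2)
  also have "\<dots> = i - 1" using i k by simp
  finally have x: "(a - n + 1) mod (k + 1) = i - 1" .
  have "a \<noteq> snk n k"
  proof
    assume "a = snk n k"
    then have "(a - n + 1) mod (k + 1) = ((n - 2) - n + 1) mod (k + 1)" unfolding snk_def using mm2[of "n-2" "k+1" n 1] by simp
    also have "\<dots> = (-1) mod (k+1)" by simp
    also have "\<dots> = k" using k by (simp add: zmod_minus1)
    finally show False using x i by simp
  qed
  moreover have "b = ff n k a" unfolding ff_def x i(4) by (simp add: algebra_simps)
  moreover have "0 \<le> a" unfolding i(3) using k by simp
  moreover have "a < k + 1" unfolding i(3) using k pos_mod_bound[of "k+1" "i+n-2"] by linarith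
  ultimately show "0 \<le> a \<and> a \<le> k \<and> a \<noteq> snk n k \<and> b = ff n k a" using i k by auto
next
  assume h: "0 \<le> a \<and> a \<le> k \<and> a \<noteq> snk n k \<and> b = ff n k a"
  define i where "i = (a - n + 1) mod (k + 1) + 1"
  have "i \<noteq> k + 1"
  proof
    assume "i = k + 1"
    then have "(a - n + 1) mod (k + 1) = k" by (simp add: i_def)
    also have "k = (-1) mod (k+1)" using k by (simp add: zmod_minus1)
    finally have "(k+1) dvd ((a - n + 1) - (-1))" by (simp only: mod_eq_dvd_iff)
    then have "(k+1) dvd (a - (n - 2))" by (simp add: algebra_simps)
    then have "a mod (k+1) = (n - 2) mod (k+1)" by (simp only: mod_eq_dvd_iff)
    then show False using h by (simp add: snk_def)
  qed
  moreover have "0 \<le> (a - n + 1) mod (k + 1)" using k by simp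
  moreover have "(a - n + 1) mod (k + 1) < k + 1" using k pos_mod_bound[of "k+1" "a - n + 1"] by linarith
  ultimately have i1: "1 \<le> i" "i \<le> k" unfolding i_def by auto
  have "(i + n - 2) mod (k + 1) = ((a - n + 1) mod (k + 1) + (n - 1)) mod (k+1)" by (simp add: i_def algebra_simps)
  also have "\<dots> = a mod (k+1)" unfolding mm by simp
  also have "\<dots> = a" using h by simp
  finally have "a = (i + n - 2) mod (k + 1)" by simp
  moreover have "b = (i + n - 1) mod k" using h by (simp add: ff_def i_def algebra_simps)
  ultimately show "(a, b) \<in> Gedges n k" unfolding Gedges_def using i1 by blast
qed

definition pp :: "int \<Rightarrow> int \<Rightarrow> int \<Rightarrow> int" where "pp n k b = ((b - n) mod k + n - 1) mod (k + 1)"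

lemma modeq_small: fixes x y m :: int assumes "0 \<le> x" "x < m" "0 \<le> y" "y < m" "x mod m = y mod m"
  shows "x = y"
proof -
  have "x mod m = x" using assms(1,2) by simp
  moreover have "y mod m = y" using assms(3,4) by simp
  ultimately show ?thesis using assms(5) by linarith
qed

lemma x_snk: fixes n k :: int assumes k: "k \<ge> 1" shows "(snk n k - n + 1) mod (k + 1) = k"
proof -
  have "(snk n k - n + 1) mod (k + 1) = ((n - 2) - n + 1) mod (k + 1)" unfolding snk_def by (rule mm2)
  also have "\<dots> = (-1) mod (k+1)" by simp
  also have "\<dots> = k" using k by (simp add: zmod_minus1)
  finally show ?thesis .
qed

lemma x_nonsink: fixes n k v :: int assumes k: "k \<ge> 1" and v: "0 \<le> v" "v \<le> k" "v \<noteq> snk n k"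
  shows "(v - n + 1) mod (k + 1) < k"
proof (rule ccontr)
  assume "\<not> ?thesis"
  moreover have "(v - n + 1) mod (k + 1) < k + 1" using k pos_mod_bound[of "k+1" "v - n + 1"] by linarith
  ultimately have "(v - n + 1) mod (k + 1) = k" by linarith
  also have "k = (snk n k - n + 1) mod (k + 1)" using x_snk k by simp
  finally have "(k+1) dvd ((v - n + 1) - (snk n k - n + 1))" by (simp only: mod_eq_dvd_iff)
  then have "(k+1) dvd (v - snk n k)" by (simp add: algebra_simps)
  then have "v mod (k+1) = snk n k mod (k+1)" by (simp only: mod_eq_dvd_iff)
  moreover have "0 \<le> snk n k" "snk n k < k + 1" unfolding snk_def using k pos_mod_bound[of "k+1" "n - 2"] by simp_all
  ultimately have "v = snk n k" using modeq_small[of v "k+1" "snk n k"] v by linarith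
  then show False using v by simp
qed

lemma ff_range: fixes n k v :: int assumes k: "k \<ge> 1" shows "0 \<le> ff n k v" "ff n k v < k"
  unfolding ff_def using k pos_mod_bound[of k] by simp_all

lemma ff_inj: fixes n k a b :: int assumes k: "k \<ge> 1"
  and a: "0 \<le> a" "a \<le> k" "a \<noteq> snk n k" and b: "0 \<le> b" "b \<le> k" "b \<noteq> snk n k"
  and e: "ff n k a = ff n k b" shows "a = b"
proof -
  let ?xa = "(a - n + 1) mod (k + 1)" and ?xb = "(b - n + 1) mod (k + 1)"
  have xa: "0 \<le> ?xa" "?xa < k" using x_nonsink[OF k a] k by simp_all
  have xb: "0 \<le> ?xb" "?xb < k" using x_nonsink[OF k b] k by simp_all
  have "(?xa + n) mod k = (?xb + n) mod k" using e by (simp add: ff_def)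
  then have "k dvd (?xa + n) - (?xb + n)" by (simp only: mod_eq_dvd_iff)
  then have "k dvd ?xa - ?xb" by (simp add: algebra_simps)
  then have "?xa mod k = ?xb mod k" by (simp only: mod_eq_dvd_iff)
  then have "?xa = ?xb" using modeq_small xa xb by blast
  then have "(k + 1) dvd (a - n + 1) - (b - n + 1)" by (simp only: mod_eq_dvd_iff)
  then have "(k + 1) dvd a - b" by (simp add: algebra_simps)
  then have "a mod (k+1) = b mod (k+1)" by (simp only: mod_eq_dvd_iff)
  then show ?thesis using modeq_small[of a "k+1" b] a b by linarith
qed

lemma ff_succ: fixes n k v :: int assumes k: "k \<ge> 1"
  and v: "0 \<le> v" "v + 1 \<le> k" "v \<noteq> snk n k" "v + 1 \<noteq> snk n k"
  shows "ff n k (v + 1) = (ff n k v + 1) mod k"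
proof -
  let ?x = "(v - n + 1) mod (k + 1)"
  have x: "0 \<le> ?x" "?x < k" using x_nonsink[OF k] v k by simp_all
  have "(v + 1 - n + 1) mod (k + 1) = (?x + 1) mod (k + 1)" using mm[of "v - n + 1" "k+1" 1] by (simp add: algebra_simps)
  also have "\<dots> = ?x + 1" using x by simp
  finally have "ff n k (v + 1) = (?x + 1 + n) mod k" by (simp add: ff_def)
  also have "\<dots> = ((?x + n) mod k + 1) mod k" using mm[of "?x + n" k 1] by (simp add: algebra_simps)
  finally show ?thesis by (simp add: ff_def)
qed

lemma pp_edge: fixes n k b :: int assumes k: "k \<ge> 1" and b: "0 \<le> b" "b < k"
  shows "(pp n k b, b) \<in> Gedges n k" "0 \<le> pp n k b" "pp n k b \<le> k"
proof -
  let ?y = "(b - n) mod k"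
  have y: "0 \<le> ?y" "?y < k" using k pos_mod_bound[of k "b - n"] by simp_all
  show p0: "0 \<le> pp n k b" unfolding pp_def using k by simp
  show p1: "pp n k b \<le> k" unfolding pp_def using k pos_mod_bound[of "k+1" "?y + n - 1"] by linarith
  have "(pp n k b - n + 1) mod (k + 1) = (?y + n - 1 - n + 1) mod (k + 1)" unfolding pp_def by (rule mm2)
  also have "\<dots> = ?y" using y by simp
  finally have x: "(pp n k b - n + 1) mod (k + 1) = ?y" .
  have ns: "pp n k b \<noteq> snk n k" using x x_snk[OF k, of n] y by auto
  have "ff n k (pp n k b) = (?y + n) mod k" unfolding ff_def x ..
  also have "\<dots> = (b - n + n) mod k" by (rule mm)
  also have "\<dots> = b" using b by simp
  finally show "(pp n k b, b) \<in> Gedges n k" using edge_iff[OF k] p0 p1 ns by simp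
qed

lemma reach_stop:
  assumes fin: "finite S" and step: "\<And>x. x \<in> S \<Longrightarrow> \<not> stop x \<Longrightarrow> (x, h x) \<in> R \<and> h x \<in> S"
  and acyc: "\<And>x. (x, x) \<notin> R\<^sup>+" and xS: "x \<in> S"
  shows "\<exists>y. stop y \<and> (x, y) \<in> R\<^sup>*"
proof (rule ccontr)
  assume nx: "\<not> ?thesis"
  have ns: "\<not> stop y" if "(x, y) \<in> R\<^sup>*" for y using nx that by blast
  have it: "(h^^j) x \<in> S \<and> (x, (h^^j) x) \<in> R\<^sup>*" for j
  proof (induction j)
    case 0 show ?case using xS by simp
  next
    case (Suc j)
    let ?y = "(h^^j) x"
    have "(?y, h ?y) \<in> R \<and> h ?y \<in> S" using step[OF conjunct1[OF Suc] ns[OF conjunct2[OF Suc]]] .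
    moreover have "(x, h ?y) \<in> R\<^sup>*" using rtrancl_into_rtrancl[OF conjunct2[OF Suc] conjunct1[OF calculation]] .
    ultimately show ?case by simp
  qed
  have st: "((h^^j) x, (h^^(Suc j)) x) \<in> R" for j
  proof -
    have "((h^^j) x, h ((h^^j) x)) \<in> R"
      using step[OF conjunct1[OF it[of j]] ns[OF conjunct2[OF it[of j]]]] by (rule conjunct1)
    then show ?thesis by simp
  qed
  have tr: "((h^^i) x, (h^^(i + Suc d)) x) \<in> R\<^sup>+" for i d
  proof (induction d)
    case 0 show ?case using st[of i] by simp
  next
    case (Suc d)
    have "((h^^i) x, (h^^(Suc (i + Suc d))) x) \<in> R\<^sup>+"
      using Suc st[of "i + Suc d"] by (rule trancl_into_trancl)
    then show ?case by simp
  qed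
  have "\<not> inj_on (\<lambda>j. (h^^j) x) {0..card S}"
  proof
    assume inj: "inj_on (\<lambda>j. (h^^j) x) {0..card S}"
    have "(\<lambda>j. (h^^j) x) ` {0..card S} \<subseteq> S" using it by blast
    then have "card ((\<lambda>j. (h^^j) x) ` {0..card S}) \<le> card S" using fin card_mono by blast
    moreover have "card ((\<lambda>j. (h^^j) x) ` {0..card S}) = Suc (card S)" using card_image[OF inj] by simp
    ultimately show False by simp
  qed
  then obtain i j where ij: "i \<noteq> j" "(h^^i) x = (h^^j) x" unfolding inj_on_def by blast
  show False
  proof (cases "i < j")
    case True
    then obtain d where "j = Suc (i + d)" using less_imp_Suc_add by blast
    then have jeq: "j = i + Suc d" by simp
    have "((h^^i) x, (h^^j) x) \<in> R\<^sup>+" using tr[of i d] by (simp only: jeq)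
    then have "((h^^j) x, (h^^j) x) \<in> R\<^sup>+" by (simp only: ij(2))
    then show False using acyc by blast
  next
    case False
    then have "j < i" using ij(1) by linarith
    then obtain d where "i = Suc (j + d)" using less_imp_Suc_add by blast
    then have ieq: "i = j + Suc d" by simp
    have "((h^^j) x, (h^^i) x) \<in> R\<^sup>+" using tr[of j d] by (simp only: ieq)
    then have "((h^^j) x, (h^^j) x) \<in> R\<^sup>+" by (simp only: ij(2))
    then show False using acyc by blast
  qed
qed

definition cyc :: "int \<Rightarrow> int \<Rightarrow> int \<Rightarrow> bool" where "cyc n k v \<longleftrightarrow> (v, v) \<in> (Gedges n k)\<^sup>+"

context fixes n k :: int assumes k: "k \<ge> 1"
begin

lemma Z1: assumes "cyc n k v" shows "0 \<le> v" "v \<le> k - 1" "v \<noteq> snk n k"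
proof -
  have vv: "(v, v) \<in> (Gedges n k)\<^sup>+" using assms by (simp add: cyc_def)
  then obtain w where "(v, w) \<in> Gedges n k" by (meson converse_tranclE)
  then show "0 \<le> v" "v \<noteq> snk n k" using edge_iff[OF k] by auto
  from vv obtain u where "(u, v) \<in> Gedges n k" by (meson tranclE)
  then have "v = ff n k u" using edge_iff[OF k] by auto
  then show "v \<le> k - 1" using ff_range[OF k, of n u] by simp
qed

lemma Z2: assumes "cyc n k v" shows "cyc n k (ff n k v)"
proof -
  have vv: "(v, v) \<in> (Gedges n k)\<^sup>+" using assms by (simp add: cyc_def)
  then show ?thesis
  proof (rule converse_tranclE)
    assume base: "(v, v) \<in> Gedges n k"
    then have "v = ff n k v" using edge_iff[OF k] by auto
    then show ?thesis using assms by simp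
  next
    fix w assume step: "(v, w) \<in> Gedges n k" "(w, v) \<in> (Gedges n k)\<^sup>+"
    then have "w = ff n k v" using edge_iff[OF k] by auto
    then have "(ff n k v, ff n k v) \<in> (Gedges n k)\<^sup>+" using step trancl_into_trancl by fast
    then show ?thesis by (simp add: cyc_def)
  qed
qed

lemma Z3: assumes "(x, y) \<in> (Gedges n k)\<^sup>*" "cyc n k x" shows "cyc n k y"
  using assms
proof (induction rule: rtrancl_induct)
  case base then show ?case .
next
  case (step y z)
  then have "z = ff n k y" using edge_iff[OF k] by auto
  then show ?case using Z2 step by simp
qed

lemma Z4: assumes "cyc n k v" shows "v \<notin> tail n k"
proof
  assume "v \<in> tail n k"
  then have "(v, snk n k) \<in> (Gedges n k)\<^sup>*" by (simp add: tail_def snk_def)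
  then have "cyc n k (snk n k)" using Z3 assms by blast
  then show False using Z1 by blast
qed

lemma all_tail: assumes nc: "\<And>v. \<not> cyc n k v" and v: "0 \<le> v" "v \<le> k" shows "v \<in> tail n k"
proof -
  have acyc: "\<And>x. (x, x) \<notin> (Gedges n k)\<^sup>+" using nc by (simp add: cyc_def)
  have "\<exists>y. y = snk n k \<and> (v, y) \<in> (Gedges n k)\<^sup>*"
  proof (rule reach_stop[where S="{0..k}" and h="ff n k"])
    fix x assume "x \<in> {0..k}" "x \<noteq> snk n k"
    then show "(x, ff n k x) \<in> Gedges n k \<and> ff n k x \<in> {0..k}"
      using edge_iff[OF k] ff_range[OF k, of n x] by auto
  qed (use acyc v in auto)
  then have fw: "(v, snk n k) \<in> (Gedges n k)\<^sup>*" by blast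
  have acyc2: "\<And>x. (x, x) \<notin> ((Gedges n k)\<inverse>)\<^sup>+" using acyc by (simp add: trancl_converse)
  have "\<exists>y. y = k \<and> (v, y) \<in> ((Gedges n k)\<inverse>)\<^sup>*"
  proof (rule reach_stop[where S="{0..k}" and h="pp n k"])
    fix x assume "x \<in> {0..k}" "x \<noteq> k"
    then have "0 \<le> x" "x < k" by auto
    then show "(x, pp n k x) \<in> (Gedges n k)\<inverse> \<and> pp n k x \<in> {0..k}"
      using pp_edge[OF k] by auto
  qed (use acyc2 v in auto)
  then have "(v, k) \<in> ((Gedges n k)\<inverse>)\<^sup>*" by blast
  then have bw: "(k, v) \<in> (Gedges n k)\<^sup>*" by (simp add: rtrancl_converse)
  show ?thesis using fw bw by (simp add: tail_def snk_def)
qed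


lemma edge_up: assumes H: "\<And>v. cyc n k v \<Longrightarrow> v \<noteq> k - 1 \<and> v \<noteq> (n - 3) mod (k + 1)"
  and x: "cyc n k x" shows "(x + 1, ff n k x + 1) \<in> Gedges n k"
proof -
  have x0: "0 \<le> x" "x + 1 \<le> k - 1" "x \<noteq> snk n k" using Z1[OF x] H[OF x] by auto
  have skrel: "(n - 3) mod (k + 1) = (snk n k - 1 + 0) mod (k + 1)"
    unfolding snk_def using mm2[of "n-2" "k+1" 1 0] by simp
  have x1: "x + 1 \<noteq> snk n k"
  proof
    assume "x + 1 = snk n k"
    then have "x = snk n k - 1" by simp
    then have "(n - 3) mod (k + 1) = x mod (k + 1)" using skrel by simp
    also have "\<dots> = x" using x0 by simp
    finally show False using H[OF x] by simp
  qed
  have "ff n k (x + 1) = (ff n k x + 1) mod k" using ff_succ[OF k, of x n] x0 x1 by simp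
  moreover have "ff n k x \<noteq> k - 1" using H[OF Z2[OF x]] by simp
  moreover have "0 \<le> ff n k x" "ff n k x < k" using ff_range[OF k] by auto
  ultimately have e: "ff n k (x + 1) = ff n k x + 1" by simp
  show ?thesis using edge_iff[OF k] x0 x1 e by simp
qed

lemma up_tr: assumes H: "\<And>v. cyc n k v \<Longrightarrow> v \<noteq> k - 1 \<and> v \<noteq> (n - 3) mod (k + 1)"
  shows "(x, y) \<in> (Gedges n k)\<^sup>+ \<Longrightarrow> cyc n k x \<Longrightarrow> (x + 1, y + 1) \<in> (Gedges n k)\<^sup>+"
proof (induction rule: trancl_induct)
  case (base y)
  then have "y = ff n k x" using edge_iff[OF k] by auto
  then show ?case using edge_up[OF H base(2)] by auto
next
  case (step y z)
  have "cyc n k y" using Z3[OF trancl_into_rtrancl[OF step(1)] step(4)] .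
  moreover have "z = ff n k y" using step(2) edge_iff[OF k] by auto
  ultimately have "(y + 1, z + 1) \<in> Gedges n k" using edge_up[OF H] by auto
  then show ?case using trancl_into_trancl[OF step(3)[OF step(4)]] by simp
qed

lemma noB: assumes H: "\<And>v. cyc n k v \<Longrightarrow> v \<noteq> k - 1 \<and> v \<noteq> (n - 3) mod (k + 1)"
  shows "\<not> cyc n k v"
proof
  assume v: "cyc n k v"
  have s: "cyc n k (w + 1)" if "cyc n k w" for w
    using up_tr[OF H, of w w] that by (simp add: cyc_def)
  have "cyc n k (v + int j)" for j
  proof (induction j)
    case 0 then show ?case using v by simp
  next
    case (Suc j) then show ?case using s[OF Suc] by (simp add: algebra_simps)
  qed
  then have "cyc n k (v + int (nat (k + 1)))" .
  then have "v + (k + 1) \<le> k - 1" using Z1 k by simp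
  then show False using Z1(1)[OF v] by simp
qed

lemma edge_down: assumes H: "\<And>v. cyc n k v \<Longrightarrow> v \<noteq> 0 \<and> v \<noteq> (n - 1) mod (k + 1)"
  and x: "cyc n k x" shows "(x - 1, ff n k x - 1) \<in> Gedges n k"
proof -
  have x0: "0 \<le> x - 1" "x \<le> k - 1" "x \<noteq> snk n k" using Z1[OF x] H[OF x] by auto
  have s1rel: "(n - 1) mod (k + 1) = (snk n k + 1) mod (k + 1)"
    unfolding snk_def using mm[of "n-2" "k+1" 1] by simp
  have x1: "x - 1 \<noteq> snk n k"
  proof
    assume "x - 1 = snk n k"
    then have "x = snk n k + 1" by simp
    then have "(n - 1) mod (k + 1) = x mod (k + 1)" using s1rel by simp
    also have "\<dots> = x" using x0 by simp
    finally show False using H[OF x] by simp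
  qed
  have "ff n k (x - 1 + 1) = (ff n k (x - 1) + 1) mod k" using ff_succ[OF k, of "x - 1" n] x0 x1 by simp
  then have fx: "ff n k x = (ff n k (x - 1) + 1) mod k" by simp
  moreover have "ff n k x \<noteq> 0" using H[OF Z2[OF x]] by simp
  moreover have "0 \<le> ff n k (x - 1)" "ff n k (x - 1) < k" using ff_range[OF k] by auto
  ultimately have e: "ff n k (x - 1) = ff n k x - 1"
    by (cases "ff n k (x - 1) + 1 = k") auto
  show ?thesis using edge_iff[OF k] x0 x1 e by simp
qed

lemma down_tr: assumes H: "\<And>v. cyc n k v \<Longrightarrow> v \<noteq> 0 \<and> v \<noteq> (n - 1) mod (k + 1)"
  shows "(x, y) \<in> (Gedges n k)\<^sup>+ \<Longrightarrow> cyc n k x \<Longrightarrow> (x - 1, y - 1) \<in> (Gedges n k)\<^sup>+"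
proof (induction rule: trancl_induct)
  case (base y)
  then have "y = ff n k x" using edge_iff[OF k] by auto
  then show ?case using edge_down[OF H base(2)] by auto
next
  case (step y z)
  have "cyc n k y" using Z3[OF trancl_into_rtrancl[OF step(1)] step(4)] .
  moreover have "z = ff n k y" using step(2) edge_iff[OF k] by auto
  ultimately have "(y - 1, z - 1) \<in> Gedges n k" using edge_down[OF H] by auto
  then show ?case using trancl_into_trancl[OF step(3)[OF step(4)]] by simp
qed

lemma noC: assumes H: "\<And>v. cyc n k v \<Longrightarrow> v \<noteq> 0 \<and> v \<noteq> (n - 1) mod (k + 1)"
  shows "\<not> cyc n k v"
proof
  assume v: "cyc n k v"
  have s: "cyc n k (w - 1)" if "cyc n k w" for w
    using down_tr[OF H, of w w] that by (simp add: cyc_def)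
  have "cyc n k (v - int j)" for j
  proof (induction j)
    case 0 then show ?case using v by simp
  next
    case (Suc j) then show ?case using s[OF Suc] by (simp add: algebra_simps)
  qed
  then have "cyc n k (v - int (nat (k + 1)))" .
  then have c: "cyc n k (v - (k + 1))" using k by simp
  have "0 \<le> v - (k + 1)" using Z1(1)[OF c] .
  then show False using Z1(2)[OF v] by simp
qed


lemma noD: assumes H: "\<And>v. cyc n k v \<Longrightarrow> v \<noteq> 0 \<and> v \<noteq> k - 1"
  shows "\<not> cyc n k v"
proof
  assume v: "cyc n k v"
  define sk where "sk = (n - 3) mod (k + 1)"
  define s1 where "s1 = (n - 1) mod (k + 1)"
  consider (a) "\<forall>v. cyc n k v \<longrightarrow> v \<noteq> sk" | (b) "\<forall>v. cyc n k v \<longrightarrow> v \<noteq> s1" | (c) "cyc n k sk" "cyc n k s1"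
    by blast
  then show False
  proof cases
    case a
    then have "\<And>w. cyc n k w \<Longrightarrow> w \<noteq> k - 1 \<and> w \<noteq> (n - 3) mod (k + 1)" using H unfolding sk_def by blast
    then have "\<not> cyc n k v" by (rule noB)
    then show False using v by simp
  next
    case b
    then have "\<And>w. cyc n k w \<Longrightarrow> w \<noteq> 0 \<and> w \<noteq> (n - 1) mod (k + 1)" using H unfolding s1_def by blast
    then have "\<not> cyc n k v" by (rule noC)
    then show False using v by simp
  next
    case c
    have sk0: "1 \<le> sk" "sk + 2 \<le> k" "sk \<noteq> snk n k" using Z1[OF c(1)] H[OF c(1)] by auto
    have "snk n k = ((n - 3) mod (k + 1) + 1) mod (k + 1)" unfolding snk_def using mm[of "n-3" "k+1" 1] by simp
    also have "\<dots> = sk + 1" using sk0 unfolding sk_def[symmetric] by simp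
    finally have snk_eq: "snk n k = sk + 1" .
    have m2: "(-2) mod (k + 1) = k - 1"
    proof -
      have e: "(-2) - (k - 1) = (k + 1) * (-1)" by simp
      have "(k + 1) dvd (-2) - (k - 1)" unfolding e by (rule dvd_triv_left)
      then have "(-2) mod (k + 1) = (k - 1) mod (k + 1)" by (simp only: mod_eq_dvd_iff)
      then show ?thesis using k by simp
    qed
    have "(sk - n + 1) mod (k + 1) = (n - 3 - n + 1) mod (k + 1)" unfolding sk_def by (rule mm2)
    also have "\<dots> = k - 1" using m2 by simp
    finally have fsk: "ff n k sk = (k - 1 + n) mod k" by (simp add: ff_def)
    have "(s1 - n + 1) mod (k + 1) = (n - 1 - n + 1) mod (k + 1)" unfolding s1_def by (rule mm2)
    then have fs1: "ff n k s1 = n mod k" by (simp add: ff_def)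
    have "(ff n k sk + 1) mod k = (k - 1 + n + 1) mod k" unfolding fsk by (rule mm)
    also have "\<dots> = n mod k" by simp
    finally have rel: "ff n k s1 = (ff n k sk + 1) mod k" using fs1 by simp
    define tk where "tk = ff n k sk"
    have ctk: "cyc n k tk" using Z2[OF c(1)] by (simp add: tk_def)
    have "tk \<noteq> k - 1" using H[OF ctk] by simp
    moreover have "0 \<le> tk" "tk < k" using ff_range[OF k] by (auto simp: tk_def)
    ultimately have "ff n k s1 = tk + 1" using rel by (simp add: tk_def[symmetric])
    then have ctk1: "cyc n k (tk + 1)" using Z2[OF c(2)] by simp
    define P where "P = {u. cyc n k u \<and> cyc n k (u + 1)}"
    have finP: "finite P"
    proof (rule finite_subset)
      show "P \<subseteq> {0..k}"
      proof
        fix u assume "u \<in> P"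
        then have "cyc n k u" unfolding P_def by simp
        then show "u \<in> {0..k}" using Z1(1,2)[of u] by simp
      qed
    qed simp
    have subP: "ff n k ` P \<subseteq> P"
    proof
      fix w assume "w \<in> ff n k ` P"
      then obtain u where u: "u \<in> P" "w = ff n k u" by blast
      have cu: "cyc n k u" "cyc n k (u + 1)" using u(1) unfolding P_def by auto
      have u0: "0 \<le> u" "u + 1 \<le> k" "u \<noteq> snk n k" "u + 1 \<noteq> snk n k" using Z1[OF cu(1)] Z1[OF cu(2)] by auto
      have "ff n k (u + 1) = (ff n k u + 1) mod k" using ff_succ[OF k] u0 by blast
      moreover have "ff n k u \<noteq> k - 1" using H[OF Z2[OF cu(1)]] by simp
      moreover have "0 \<le> ff n k u" "ff n k u < k" using ff_range[OF k] by auto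
      ultimately have "ff n k (u + 1) = ff n k u + 1" by simp
      then have "cyc n k (ff n k u + 1)" using Z2[OF cu(2)] by simp
      then show "w \<in> P" using Z2[OF cu(1)] u(2) unfolding P_def by simp
    qed
    have injP: "inj_on (ff n k) P"
    proof (rule inj_onI)
      fix a b assume ab: "a \<in> P" "b \<in> P" "ff n k a = ff n k b"
      then have ca: "cyc n k a" and cb: "cyc n k b" unfolding P_def by auto
      have "0 \<le> a" "a \<le> k" "a \<noteq> snk n k" using Z1[OF ca] by auto
      moreover have "0 \<le> b" "b \<le> k" "b \<noteq> snk n k" using Z1[OF cb] by auto
      ultimately show "a = b" using ff_inj[OF k, where a=a and b=b] ab(3) by blast
    qed
    have imgeq: "ff n k ` P = P" using endo_inj_surj[OF finP subP injP] .
    have tkP: "tk \<in> P" unfolding P_def using ctk ctk1 by simp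
    have "tk \<in> ff n k ` P" using tkP imgeq by (simp only:)
    then obtain u where u1: "u \<in> P" and u2: "tk = ff n k u" by (rule imageE)
    have cu: "cyc n k u" "cyc n k (u + 1)" using u1 unfolding P_def by auto
    have ua: "0 \<le> u" "u \<le> k" "u \<noteq> snk n k" using Z1[OF cu(1)] by auto
    have sa: "0 \<le> sk" "sk \<le> k" "sk \<noteq> snk n k" using Z1[OF c(1)] by auto
    have "ff n k u = ff n k sk" using u2 by (simp add: tk_def)
    then have "u = sk" by (rule ff_inj[OF k ua sa])
    then have "cyc n k (snk n k)" using cu(2) snk_eq by simp
    then show False using Z1(3)[of "snk n k"] by simp
  qed
qed

end

theorem lemma3p7:
  fixes n k :: int
  assumes "k \<ge> 1"
  shows "(\<not> has_cycle n k \<longleftrightarrow> k - 1 \<in> tail n k \<and> (n - 3) mod (k + 1) \<in> tail n k)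
       \<and> (\<not> has_cycle n k \<longleftrightarrow> 0 \<in> tail n k \<and> (n - 1) mod (k + 1) \<in> tail n k)
       \<and> (\<not> has_cycle n k \<longleftrightarrow> 0 \<in> tail n k \<and> k - 1 \<in> tail n k)"
proof -
  have k: "k \<ge> 1" by fact
  have hc: "has_cycle n k \<longleftrightarrow> (\<exists>v. cyc n k v)" by (simp add: has_cycle_def cyc_def)
  have allT: "v \<in> tail n k" if "\<not> has_cycle n k" "0 \<le> v" "v \<le> k" for v
    using all_tail[OF k, of n v] that hc by blast
  have r1: "0 \<le> (n - 3) mod (k + 1)" "(n - 3) mod (k + 1) \<le> k"
    using k pos_mod_bound[of "k+1" "n - 3"] by auto
  have r2: "0 \<le> (n - 1) mod (k + 1)" "(n - 1) mod (k + 1) \<le> k"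
    using k pos_mod_bound[of "k+1" "n - 1"] by auto
  have B: "\<not> has_cycle n k" if "k - 1 \<in> tail n k" "(n - 3) mod (k + 1) \<in> tail n k"
  proof -
    have "\<And>v. cyc n k v \<Longrightarrow> v \<noteq> k - 1 \<and> v \<noteq> (n - 3) mod (k + 1)" using Z4[OF k] that by blast
    then show ?thesis using noB[OF k] hc by blast
  qed
  have C: "\<not> has_cycle n k" if "0 \<in> tail n k" "(n - 1) mod (k + 1) \<in> tail n k"
  proof -
    have "\<And>v. cyc n k v \<Longrightarrow> v \<noteq> 0 \<and> v \<noteq> (n - 1) mod (k + 1)" using Z4[OF k] that by blast
    then show ?thesis using noC[OF k] hc by blast
  qed
  have D: "\<not> has_cycle n k" if "0 \<in> tail n k" "k - 1 \<in> tail n k"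
  proof -
    have "\<And>v. cyc n k v \<Longrightarrow> v \<noteq> 0 \<and> v \<noteq> k - 1" using Z4[OF k] that by blast
    then show ?thesis using noD[OF k] hc by blast
  qed
  have k1: "0 \<le> k - 1" "k - 1 \<le> k" using k by auto
  have k0: "0 \<le> (0::int)" "(0::int) \<le> k" using k by auto
  have e1: "\<not> has_cycle n k \<longleftrightarrow> k - 1 \<in> tail n k \<and> (n - 3) mod (k + 1) \<in> tail n k"
    using allT[OF _ k1] allT[OF _ r1] B by blast
  have e2: "\<not> has_cycle n k \<longleftrightarrow> 0 \<in> tail n k \<and> (n - 1) mod (k + 1) \<in> tail n k"
    using allT[OF _ k0] allT[OF _ r2] C by blast
  have e3: "\<not> has_cycle n k \<longleftrightarrow> 0 \<in> tail n k \<and> k - 1 \<in> tail n k"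
    using allT[OF _ k0] allT[OF _ k1] D by blast
  show ?thesis using e1 e2 e3 by (rule conjI[OF _ conjI])
qed
end
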